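(* For all integers $n\ge 1$ and $d\ge 3$, $$m^*(n,d,d-1)\ge \frac{d-1}{e}\sqrt[d-1]{\frac{nd}{d-1}},$$ where $e$ is Euler's number.
   Context: For a binary matrix $M$ and a nonempty set $S$ of its columns, $S$ is a stopping set if the submatrix formed by $S$ has no row with exactly one $1$; $s(M)$ is the minimum size of a stopping set ($+\infty$ if none). $M$ is $(d,k)$-decodable if $s(M)\ge d+1$ and every column has exactly $k$ ones; $m^*(n,d,k)$ is the minimum $m$ such that an $m\times n$ $(d,k)$-decodable binary matrix exists. *)

theory Defs
  imports "HOL-Analysis.Analysis" "HOL-Library.Extended_Nat"
begin

text \<open>A binary m x n matrix is represented as M :: nat => nat => bool, where
  M i j (for i < m, j < n) is the entry in row i, column j (True = 1).\<close>

definition stopping_set :: "nat \<Rightarrow> nat \<Rightarrow> (nat \<Rightarrow> nat \<Rightarrow> bool) \<Rightarrow> nat set \<Rightarrow> bool" where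
  "stopping_set m n M S \<longleftrightarrow>
     S \<noteq> {} \<and> S \<subseteq> {..<n} \<and> (\<forall>i<m. card {j\<in>S. M i j} \<noteq> 1)"

definition stop_dist :: "nat \<Rightarrow> nat \<Rightarrow> (nat \<Rightarrow> nat \<Rightarrow> bool) \<Rightarrow> enat" where
  "stop_dist m n M = (INF S\<in>{S. stopping_set m n M S}. enat (card S))"

definition decodable :: "nat \<Rightarrow> nat \<Rightarrow> nat \<Rightarrow> nat \<Rightarrow> (nat \<Rightarrow> nat \<Rightarrow> bool) \<Rightarrow> bool" where
  "decodable m n d k M \<longleftrightarrow>
     stop_dist m n M \<ge> enat (d + 1) \<and> (\<forall>j<n. card {i. i < m \<and> M i j} = k)"

definition mstar :: "nat \<Rightarrow> nat \<Rightarrow> nat \<Rightarrow> nat" where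
  "mstar n d k = (LEAST m. \<exists>M. decodable m n d k M)"

end

theory Submission
  imports Defs
begin

lemma pow_fact_le_exp:
  fixes x :: real assumes "0 \<le> x"
  shows "x ^ k / fact k \<le> exp x"
proof -
  have "(\<Sum>i\<in>{k}. x ^ i / fact i) \<le> (\<Sum>i. x ^ i / fact i)"
    using summable_exp_generic[of x] assms
    by (intro sum_le_suminf) (auto simp: divide_inverse ac_simps)
  thus ?thesis by (simp add: exp_def divide_inverse ac_simps)
qed

lemma binom_le_real:
  fixes m k :: nat assumes "k > 0"
  shows "real (m choose k) \<le> (exp 1 * real m / real k) ^ k"
proof -
  have a: "real (m choose k) * fact k \<le> real m ^ k"
    using binomial_fact_pow[of m k] by (metis of_nat_fact of_nat_le_iff of_nat_mult of_nat_power)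
  have b: "real k ^ k / fact k \<le> exp (real k)" by (rule pow_fact_le_exp) simp
  have "real (m choose k) \<le> real m ^ k / fact k" using a by (simp add: field_simps)
  also have "\<dots> = (real m / real k) ^ k * (real k ^ k / fact k)"
    using assms by (simp add: field_simps power_divide)
  also have "\<dots> \<le> (real m / real k) ^ k * exp (real k)"
    by (intro mult_left_mono b) simp
  also have "\<dots> = (exp 1 * real m / real k) ^ k"
    by (simp add: power_mult_distrib exp_of_nat_mult[symmetric] power_divide)
  finally show ?thesis .
qed

lemma two_elems: assumes "2 \<le> card (X::'a set)" obtains a b where "a\<in>X" "b\<in>X" "a\<noteq>b"
proof -
  have "finite X" "X \<noteq> {}" using assms by (auto intro: card_ge_0_finite)
  then obtain a where a: "a \<in> X" by blast
  have "card (X - {a}) \<ge> 1" using assms a \<open>finite X\<close> by simp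
  hence "X - {a} \<noteq> {}" by (metis card.empty not_one_le_zero)
  then obtain b where "b \<in> X - {a}" by blast
  thus ?thesis using a that by blast
qed

lemma key:
  fixes m n d :: nat and M
  assumes dec: "decodable m n d (d - 1) M" and n1: "n \<ge> 1" and d3: "d \<ge> 3"
  shows "real n * real d / real (d - 1) \<le> (exp 1 * real m / real (d - 1)) ^ (d - 1)"
proof -
  define k where "k = d - 1"
  have k2: "k \<ge> 2" and dk: "d = k + 1" using d3 by (auto simp: k_def)
  define T where "T j = {i. i < m \<and> M i j}" for j
  have stop: "card S \<ge> d + 1" if "stopping_set m n M S" for S
  proof -
    have "stop_dist m n M \<le> enat (card S)" unfolding stop_dist_def
      using that by (intro INF_lower) auto
    thus ?thesis using dec unfolding decodable_def by (auto dest: order_trans)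
  qed
  have Tc: "card (T j) = k" if "j < n" for j
    using dec that unfolding decodable_def T_def k_def by auto
  have Ts: "T j \<subseteq> {..<m}" for j unfolding T_def by auto
  have Tf: "finite (T j)" for j using Ts finite_subset by blast
  have inj: "inj_on T {..<n}"
  proof (rule inj_onI, rule ccontr)
    fix a b assume ab: "a \<in> {..<n}" "b \<in> {..<n}" "T a = T b" "a \<noteq> b"
    have "stopping_set m n M {a, b}" unfolding stopping_set_def
    proof (intro conjI allI impI)
      fix i assume "i < m"
      hence "M i a = M i b" using ab(3) unfolding T_def by blast
      hence "{j \<in> {a, b}. M i j} = (if M i a then {a,b} else {})" by auto
      thus "card {j \<in> {a, b}. M i j} \<noteq> 1" using ab(4) by simp
    qed (use ab in auto)
    hence "card {a,b} \<ge> d + 1" by (rule stop)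
    thus False using ab(4) d3 by simp
  qed
  have mk: "k \<le> m" using Tc[of 0] n1 Ts[of 0] card_mono[of "{..<m}" "T 0"] by simp
  have goal: "real n * real (k + 1) / real k \<le> (exp 1 * real m / real k) ^ k"
  proof (cases "m = k")
    case True
    have "T j = {..<m}" if "j < n" for j
      using Tc[OF that] Ts[of j] True by (simp add: card_subset_eq)
    hence Teq: "T j = T 0" if "j < n" for j using that n1 by simp
    have "n \<le> 1"
    proof (rule ccontr)
      assume "\<not> n \<le> 1"
      hence "1 < n" by simp
      hence "T 1 = T 0" using Teq by blast
      hence "(1::nat) = 0" using inj_onD[OF inj] \<open>1 < n\<close> by auto
      thus False by simp
    qed
    hence n: "n = 1" using n1 by simp
    have "real (k+1) / real k \<le> 2" using k2 by (simp add: field_simps)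
    also have "(2::real) \<le> exp 1" using exp_ge_add_one_self[of 1] by simp
    also have "exp (1::real) \<le> exp 1 ^ k"
    proof -
      have e1: "1 \<le> exp (1::real)" using exp_ge_add_one_self[of 1] by linarith
      show ?thesis using power_increasing[OF _ e1, of 1 k] k2 by simp
    qed
    finally show ?thesis using True k2 n by simp
  next
    case False
    hence mk': "k < m" using mk by simp
    define Ks where "Ks = {U. U \<subseteq> {..<m} \<and> card U = k + 1}"
    define P where "P = Sigma {..<n} (\<lambda>j. {U \<in> Ks. T j \<subseteq> U})"
    define P' where "P' = Sigma Ks (\<lambda>U. {j \<in> {..<n}. T j \<subseteq> U})"
    have fKs: "finite Ks" unfolding Ks_def by (rule finite_subset[of _ "Pow {..<m}"]) auto
    have cKs: "card Ks = m choose (k + 1)" unfolding Ks_def using n_subsets[of "{..<m}"] by simp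
    have inner1: "m - k \<le> card {U \<in> Ks. T j \<subseteq> U}" if "j < n" for j
    proof -
      have "(\<lambda>x. insert x (T j)) ` ({..<m} - T j) \<subseteq> {U \<in> Ks. T j \<subseteq> U}"
        using Ts[of j] Tc[OF that] Tf[of j] by (auto simp: Ks_def)
      moreover have "inj_on (\<lambda>x. insert x (T j)) ({..<m} - T j)"
        by (auto simp: inj_on_def)
      moreover have "card ({..<m} - T j) = m - k"
        using Ts[of j] Tc[OF that] Tf[of j] by (simp add: card_Diff_subset)
      ultimately show ?thesis using fKs
        by (metis (no_types, lifting) card_image card_mono finite_subset mem_Collect_eq subsetI)
    qed
    have inner2: "card {j \<in> {..<n}. T j \<subseteq> U} \<le> k" if U: "U \<in> Ks" for U
    proof -
      define A where "A = {j \<in> {..<n}. T j \<subseteq> U}"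
      define Vs where "Vs = {V. V \<subseteq> U \<and> card V = k}"
      have Uf: "finite U" and Uc: "card U = k + 1" and Um: "U \<subseteq> {..<m}"
        using U finite_subset unfolding Ks_def by auto
      have cVs: "card Vs = k + 1" unfolding Vs_def using n_subsets[OF Uf, of k] Uc by simp
      have fVs: "finite Vs" unfolding Vs_def using Uf by auto
      have injA: "inj_on T A" using inj unfolding A_def by (auto intro: inj_on_subset)
      have imgA: "T ` A \<subseteq> Vs" unfolding A_def Vs_def using Tc by auto
      have cA: "card A = card (T ` A)" using card_image[OF injA] by simp
      have "card A \<le> k + 1" using cA card_mono[OF fVs imgA] cVs by simp
      moreover have "card A \<noteq> k + 1"
      proof
        assume eq: "card A = k + 1"
        have img: "T ` A = Vs" using card_subset_eq[OF fVs imgA] cA eq cVs by simp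
        have fA: "finite A" unfolding A_def by auto
        have "stopping_set m n M A" unfolding stopping_set_def
        proof (intro conjI allI impI)
          show "A \<noteq> {}" using eq by auto
          show "A \<subseteq> {..<n}" unfolding A_def by auto
          fix i assume im: "i < m"
          show "card {j \<in> A. M i j} \<noteq> 1"
          proof (cases "i \<in> U")
            case False
            have "{j \<in> A. M i j} = {}" using False im unfolding A_def T_def by auto
            thus ?thesis by (metis card.empty zero_neq_one)
          next
            case True
            have "card (U - {i}) \<ge> 2" using Uc k2 True Uf by simp
            then obtain a b where abU: "a \<in> U - {i}" "b \<in> U - {i}" "a \<noteq> b"
              by (rule two_elems)
            have "U - {a} \<in> Vs" "U - {b} \<in> Vs" using abU Uc Uf unfolding Vs_def by auto
            then obtain ja jb where ja: "ja \<in> A" "T ja = U - {a}" and jb: "jb \<in> A" "T jb = U - {b}"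
              using img by (metis imageE)
            have "ja \<noteq> jb" using ja jb abU by auto
            moreover have "M i ja" "M i jb" using ja(2) jb(2) abU True im unfolding T_def by auto
            ultimately have "{ja, jb} \<subseteq> {j \<in> A. M i j}" using ja jb by auto
            hence "card {ja, jb} \<le> card {j \<in> A. M i j}" using fA by (intro card_mono) auto
            thus ?thesis using \<open>ja \<noteq> jb\<close> by auto
          qed
        qed
        hence "card A \<ge> d + 1" by (rule stop)
        thus False using eq dk by simp
      qed
      ultimately show ?thesis unfolding A_def by simp
    qed
    have fP: "\<forall>j\<in>{..<n}. finite {U \<in> Ks. T j \<subseteq> U}" using fKs by auto
    have "n * (m - k) \<le> (\<Sum>j<n. card {U \<in> Ks. T j \<subseteq> U})"
      using inner1 sum_mono[of "{..<n}" "\<lambda>_. m - k"] by simp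
    also have "\<dots> = card P" unfolding P_def using card_SigmaI[of "{..<n}"] fP by simp
    also have "card P = card P'"
    proof -
      have "bij_betw prod.swap P P'" unfolding P_def P'_def bij_betw_def by (auto simp: inj_on_def image_iff)
      thus ?thesis by (rule bij_betw_same_card)
    qed
    also have "card P' = (\<Sum>U\<in>Ks. card {j \<in> {..<n}. T j \<subseteq> U})"
      unfolding P'_def using card_SigmaI[of Ks] fKs by simp
    also have "\<dots> \<le> (\<Sum>U\<in>Ks. k)" by (intro sum_mono inner2)
    also have "\<dots> = k * (m choose (k + 1))" using cKs by simp
    finally have c1: "n * (m - k) \<le> k * (m choose (k + 1))" .
    have id: "(k + 1) * (m choose (k + 1)) = (m - k) * (m choose k)"
      using times_binomial_minus1_eq[of "k+1" m] binomial_absorb_comp[of m k] by simp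
    have "n * (k + 1) * (m - k) = (n * (m - k)) * (k + 1)" by (simp only: ac_simps)
    also have "\<dots> \<le> (k * (m choose (k + 1))) * (k + 1)" by (rule mult_right_mono[OF c1]) simp
    also have "\<dots> = k * ((k + 1) * (m choose (k + 1)))" by (simp only: ac_simps)
    also have "\<dots> = k * (m choose k) * (m - k)" unfolding id by (simp only: ac_simps)
    finally have "n * (k + 1) * (m - k) \<le> k * (m choose k) * (m - k)" .
    hence c2: "n * (k + 1) \<le> k * (m choose k)" using mk' by simp
    have "real n * real (k + 1) / real k \<le> real (m choose k)"
      using c2 k2 by (simp add: field_simps) (metis of_nat_le_iff of_nat_mult of_nat_add of_nat_1 mult.commute)
    also have "\<dots> \<le> (exp 1 * real m / real k) ^ k" using binom_le_real k2 by simp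
    finally show ?thesis .
  qed
  hence "real n * real d / real k \<le> (exp 1 * real m / real k) ^ k" using dk by simp
  thus ?thesis unfolding k_def .
qed

theorem theorem6p4:
  fixes n d :: nat
  assumes "n \<ge> 1" and "d \<ge> 3"
  shows "(real (d - 1) / exp 1) * root (d - 1) (real (n * d) / real (d - 1))
           \<le> real (mstar n d (d - 1))"
proof -
  define k where "k = d - 1"
  have k2: "k \<ge> 2" using assms k_def by simp
  have ex: "\<exists>m M. decodable m n d k M"
  proof (intro exI)
    define M where "M i j = (i div k = j)" for i j :: nat
    show "decodable (n * k) n d k M" unfolding decodable_def
    proof (intro conjI allI impI)
      have "\<not> stopping_set (n*k) n M S" for S
      proof
        assume S: "stopping_set (n*k) n M S"
        then obtain j where j: "j \<in> S" "j < n" unfolding stopping_set_def by auto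
        have "j * k < n * k" using j k2 by simp
        moreover have "{j' \<in> S. M (j*k) j'} = {j}" using j k2 unfolding M_def by auto
        moreover have "card {j' \<in> S. M (j*k) j'} = 1" using calculation(2) by simp
        ultimately show False using S unfolding stopping_set_def by blast
      qed
      hence e: "Collect (stopping_set (n*k) n M) = {}" by blast
      show "enat (d + 1) \<le> stop_dist (n*k) n M" unfolding stop_dist_def e by simp
      fix j assume "j < n"
      have dv: "(i div k = j) = (j*k \<le> i \<and> i < j*k+k)" for i
      proof -
        have "(i div k = j) = (j \<le> i div k \<and> i div k < Suc j)" by auto
        also have "\<dots> = (j*k \<le> i \<and> i < Suc j * k)" using k2
          by (simp add: less_eq_div_iff_mult_less_eq div_less_iff_less_mult)
        finally show ?thesis by (simp add: add.commute)
      qed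
      have "j*k+k \<le> n*k" using \<open>j < n\<close>
        by (metis Suc_leI add.commute mult_Suc mult_le_mono1)
      hence "{i. i < n * k \<and> M i j} = {j*k..<j*k+k}"
        unfolding M_def dv by auto
      thus "card {i. i < n * k \<and> M i j} = k" by simp
    qed
  qed
  define m where "m = mstar n d k"
  obtain M where M: "decodable m n d k M"
    unfolding m_def mstar_def using LeastI_ex[OF ex] by blast
  have b: "real n * real d / real k \<le> (exp 1 * real m / real k) ^ k"
    using key[OF _ assms(1,2)] M k_def by simp
  have "root k (real (n * d) / real k) \<le> root k ((exp 1 * real m / real k) ^ k)"
    using b k2 by (simp add: real_root_le_mono)
  also have "\<dots> = exp 1 * real m / real k" using k2 by (simp add: real_root_power_cancel)
  finally have "real k / exp 1 * root k (real (n * d) / real k) \<le> real k / exp 1 * (exp 1 * real m / real k)"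
    by (intro mult_left_mono) auto
  also have "\<dots> = real m" using k2 by simp
  finally show ?thesis unfolding m_def k_def .
qed

end
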